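(* Let $L \geq 1$, $m = L+1$, $\gamma = (L+1)^3$, and for $i \in \{0,\ldots,L\}$ and $k \in [m]$ define $$w_i(k) = \gamma^{2(i+1)k - k^2 + 1} + \sum_{r=0}^L \gamma^{(2r+1)(i+1) - r^2 - r}, \qquad \pi_i(A_k) = \frac{w_i(k)}{\sum_{h=1}^m w_i(h)}.$$ Let $B = \min_{k\in[m]}\prod_{i=1}^L \min\left\{1, \frac{\pi_{i-1}(A_k)}{\pi_i(A_k)}\right\}$. Then $B > \frac{1}{(L+1)^7}$.
   Context: These numbers are the masses of the modes $A_k$ at level $i$ in the paper's construction of a multimodal target (cross terms neglected); $B$ is the bottleneck ratio of the corresponding parallel tempering chain. *)

theory Defs
  imports Complex_Main
begin

definition gam :: "nat \<Rightarrow> real" where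
  "gam L = (real L + 1) ^ 3"

definition wt :: "nat \<Rightarrow> nat \<Rightarrow> nat \<Rightarrow> real" where
  "wt L i k = gam L powi (2 * (int i + 1) * int k - int k ^ 2 + 1)
     + (\<Sum>r=0..L. gam L powi ((2 * int r + 1) * (int i + 1) - int r ^ 2 - int r))"

definition piA :: "nat \<Rightarrow> nat \<Rightarrow> nat \<Rightarrow> real" where
  "piA L i k = wt L i k / (\<Sum>h=1..L+1. wt L i h)"

definition bottleneck :: "nat \<Rightarrow> real" where
  "bottleneck L = Min ((\<lambda>k. \<Prod>i=1..L. min 1 (piA L (i - 1) k / piA L i k)) ` {1..L+1})"

end

theory Submission
  imports Defs
begin

definition ah :: "nat \<Rightarrow> nat \<Rightarrow> nat \<Rightarrow> real" where
  "ah L i k = gam L powi (1 - (int k - int i - 1)^2)"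

definition ch :: "nat \<Rightarrow> nat \<Rightarrow> real" where
  "ch L i = (\<Sum>r=0..L. gam L powi (- ((int r - int i) * (int r - int i - 1))))"

lemma gam_ge: "gam L \<ge> 1"
  unfolding gam_def by simp

lemma gam_ge8: "L \<ge> 1 \<Longrightarrow> gam L \<ge> 8"
proof -
  assume "L \<ge> 1"
  then have "real L + 1 \<ge> 2" by simp
  then have "(real L + 1)^3 \<ge> 2^3" by (rule power_mono) simp
  then show ?thesis unfolding gam_def by simp
qed

lemma wt_eq: "wt L i k = gam L powi ((int i + 1)^2) * (ah L i k + ch L i)"
proof -
  have g0: "gam L \<noteq> 0" using gam_ge[of L] by linarith
  have e1: "2 * (int i + 1) * int k - int k ^ 2 + 1 = (int i + 1)^2 + (1 - (int k - int i - 1)^2)"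
    by (simp add: power2_eq_square algebra_simps)
  have e2: "\<And>r. (2 * int r + 1) * (int i + 1) - int r ^ 2 - int r
      = (int i + 1)^2 + (- ((int r - int i) * (int r - int i - 1)))"
    by (simp add: power2_eq_square algebra_simps)
  show ?thesis
    unfolding wt_def ah_def ch_def e1 e2 power_int_add[OF disjI1[OF g0]]
    by (simp add: distrib_left sum_distrib_left)
qed

lemma piA_eq: "piA L i k = (ah L i k + ch L i) / ((\<Sum>h=1..L+1. ah L i h) + (real L + 1) * ch L i)"
proof -
  have gp: "gam L powi ((int i + 1)^2) > 0" using gam_ge[of L] by simp
  have "(\<Sum>h=1..L+1. wt L i h) = gam L powi ((int i + 1)^2) * ((\<Sum>h=1..L+1. ah L i h) + (real L + 1) * ch L i)"
    by (simp add: wt_eq sum_distrib_left[symmetric] sum.distrib distrib_left)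
  then have "piA L i k = (gam L powi ((int i + 1)^2) * (ah L i k + ch L i)) / (gam L powi ((int i + 1)^2) * ((\<Sum>h=1..L+1. ah L i h) + (real L + 1) * ch L i))"
    unfolding piA_def wt_eq[of L i k] by simp
  also have "\<dots> = (ah L i k + ch L i) / ((\<Sum>h=1..L+1. ah L i h) + (real L + 1) * ch L i)"
    using gp by (rule mult_divide_mult_cancel_left[OF less_imp_neq[symmetric]])
  finally show ?thesis .
qed

lemma small_term:
  fixes x :: int
  assumes "x \<le> -2"
  shows "gam L powi x \<le> 1 / gam L ^ 2"
proof -
  have "gam L powi x \<le> gam L powi (-2)"
    by (rule power_int_increasing) (use assms gam_ge[of L] in auto)
  also have "\<dots> = 1 / gam L ^ 2" by (simp add: power_int_minus_divide)
  finally show ?thesis .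
qed

lemma int_prod_ge2:
  fixes x :: int
  assumes "x \<noteq> 0" "x \<noteq> 1"
  shows "x * (x - 1) \<ge> 2"
proof (cases "x \<ge> 2")
  case True
  then have "x * (x - 1) \<ge> 2 * 1" by (intro mult_mono) auto
  then show ?thesis by simp
next
  case False
  then have "x \<le> -1" using assms by auto
  then have "(-x) * (1 - x) \<ge> 1 * 2" by (intro mult_mono) auto
  then show ?thesis by (simp add: algebra_simps)
qed

lemma ch_term_le:
  "gam L powi (- ((int r - int i) * (int r - int i - 1)))
     \<le> (if r = i then 1 else 0) + (if r = Suc i then 1 else 0) + 1 / gam L ^ 2"
proof (cases "r = i \<or> r = Suc i")
  case True
  then show ?thesis using gam_ge[of L] by auto
next
  case False
  then have "(int r - int i) * (int r - int i - 1) \<ge> 2"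
    by (intro int_prod_ge2) auto
  then have "gam L powi (- ((int r - int i) * (int r - int i - 1))) \<le> 1 / gam L ^ 2"
    by (intro small_term) auto
  then show ?thesis using False by auto
qed

lemma ch_le: "ch L i \<le> 2 + (real L + 1) / gam L ^ 2"
proof -
  have "ch L i \<le> (\<Sum>r=0..L. (if r = i then 1 else 0) + (if r = Suc i then 1 else 0) + 1 / gam L ^ 2)"
    unfolding ch_def by (rule sum_mono) (rule ch_term_le)
  also have "\<dots> = (if i \<in> {0..L} then 1 else 0) + (if Suc i \<in> {0..L} then 1 else 0) + (real L + 1) / gam L ^ 2"
    by (simp add: sum.distrib)
  also have "\<dots> \<le> 2 + (real L + 1) / gam L ^ 2" by auto
  finally show ?thesis .
qed

lemma ch_ge1: "i \<le> L \<Longrightarrow> ch L i \<ge> 1"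
proof -
  assume "i \<le> L"
  have "(\<Sum>r\<in>{i}. gam L powi (- ((int r - int i) * (int r - int i - 1)))) \<le> ch L i"
    unfolding ch_def using \<open>i \<le> L\<close> gam_ge[of L] by (intro sum_mono2) auto
  then show ?thesis by simp
qed

lemma ch_ge2: "i < L \<Longrightarrow> ch L i \<ge> 2"
proof -
  assume "i < L"
  have "(\<Sum>r\<in>{i, Suc i}. gam L powi (- ((int r - int i) * (int r - int i - 1)))) \<le> ch L i"
    unfolding ch_def using \<open>i < L\<close> gam_ge[of L] by (intro sum_mono2) auto
  then show ?thesis by simp
qed

lemma ah_pos: "ah L i k > 0"
  unfolding ah_def using gam_ge[of L] by simp

lemma ah_mid: "ah L i (Suc i) = gam L" unfolding ah_def by simp
lemma ah_left: "ah L i i = 1" unfolding ah_def by simp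
lemma ah_right: "ah L i (Suc (Suc i)) = 1" unfolding ah_def by simp

lemma ah_far: "k \<ge> i + 3 \<or> k + 1 \<le> i \<Longrightarrow> ah L i k \<le> 1 / gam L ^ 2"
proof -
  assume a: "k \<ge> i + 3 \<or> k + 1 \<le> i"
  have "(int k - int i - 1)^2 \<ge> 2^2"
  proof (cases "k \<ge> i + 3")
    case True
    then show ?thesis by (intro power_mono) auto
  next
    case False
    then have "(int i + 1 - int k)^2 \<ge> 2^2" using a by (intro power_mono) auto
    moreover have "(int i + 1 - int k)^2 = (int k - int i - 1)^2" by (simp add: power2_eq_square algebra_simps)
    ultimately show ?thesis by linarith
  qed
  then have "1 - (int k - int i - 1)^2 \<le> -2" by simp
  then show ?thesis unfolding ah_def by (rule small_term)
qed

lemma ah_term_le: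
  "ah L i h \<le> (if h = Suc i then gam L else 0) + (if h = i then 1 else 0) + (if h = Suc (Suc i) then 1 else 0) + 1 / gam L ^ 2"
proof -
  consider "h = Suc i" | "h = i" | "h = Suc (Suc i)" | "h \<ge> i + 3 \<or> h + 1 \<le> i" by (atomize_elim) presburger
  then show ?thesis
  proof cases
    case 1 then show ?thesis by (simp add: ah_mid)
  next
    case 2 then show ?thesis by (simp add: ah_left)
  next
    case 3 then show ?thesis by (simp add: ah_right)
  next
    case 4 then have "ah L i h \<le> 1 / gam L ^ 2" by (rule ah_far)
    then show ?thesis using 4 by auto
  qed
qed

lemma sah_le: "(\<Sum>h=1..L+1. ah L i h) \<le> gam L + 2 + (real L + 1) / gam L ^ 2"
proof -
  have "(\<Sum>h=1..L+1. ah L i h) \<le> (\<Sum>h=1..L+1. (if h = Suc i then gam L else 0) + (if h = i then 1 else 0) + (if h = Suc (Suc i) then 1 else 0) + 1 / gam L ^ 2)"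
    by (rule sum_mono) (rule ah_term_le)
  also have "\<dots> = (if Suc i \<in> {1..L+1} then gam L else 0) + (if i \<in> {1..L+1} then 1 else 0) + (if Suc (Suc i) \<in> {1..L+1} then 1 else 0) + (real L + 1) / gam L ^ 2"
    by (simp add: sum.distrib)
  also have "\<dots> \<le> gam L + 2 + (real L + 1) / gam L ^ 2" using gam_ge[of L] by auto
  finally show ?thesis .
qed

lemma sah_ge: "1 \<le> i \<Longrightarrow> i \<le> L \<Longrightarrow> (\<Sum>h=1..L+1. ah L i h) \<ge> gam L + 1"
proof -
  assume "1 \<le> i" "i \<le> L"
  have "(\<Sum>h\<in>{i, Suc i}. ah L i h) \<le> (\<Sum>h=1..L+1. ah L i h)"
    using \<open>1 \<le> i\<close> \<open>i \<le> L\<close> by (intro sum_mono2) (auto intro: less_imp_le[OF ah_pos])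
  then show ?thesis by (simp add: ah_mid ah_left)
qed

lemma ah_mono_lvl: "1 \<le> i \<Longrightarrow> k \<le> i \<Longrightarrow> ah L i k \<le> ah L (i - 1) k"
proof -
  assume a: "1 \<le> i" "k \<le> i"
  have ii: "int (i - 1) = int i - 1" using a by simp
  have "(int k - int i)^2 \<le> (int k - int i - 1)^2"
  proof -
    have "(int i - int k)^2 \<le> (int i - int k + 1)^2" using a by (intro power_mono) auto
    then show ?thesis by (simp add: power2_eq_square algebra_simps)
  qed
  then show ?thesis unfolding ah_def ii using gam_ge[of L]
    by (intro power_int_increasing) auto
qed

lemma n_le_gam: "real L + 1 \<le> gam L"
proof -
  have x: "real L + 1 \<ge> 1" by simp
  have "(real L + 1) * 1 \<le> (real L + 1) * (real L + 1)^2"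
    using x by (intro mult_left_mono) (auto simp: one_le_power)
  then show ?thesis unfolding gam_def by (simp add: power3_eq_cube power2_eq_square)
qed

lemma D_facts: "0 \<le> (real L + 1) / gam L ^ 2 \<and> (real L + 1) / gam L ^ 2 \<le> 1 \<and> 1 / gam L ^ 2 \<le> (real L + 1) / gam L ^ 2"
proof -
  have g1: "gam L \<ge> 1" by (rule gam_ge)
  have h: "gam L * 1 \<le> gam L * gam L" using g1 by (intro mult_left_mono) auto
  have "real L + 1 \<le> gam L ^ 2" using h n_le_gam[of L] unfolding power2_eq_square by linarith
  moreover have "gam L ^ 2 > 0" using g1 by simp
  ultimately show ?thesis by (simp add: divide_right_mono)
qed

definition PP :: "nat \<Rightarrow> nat \<Rightarrow> nat \<Rightarrow> real" where
  "PP L k i = (if i = k - 1 then 1 / gam L else 1) * (if i = k - 2 then 1 / 2 else 1)"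

lemma U_bound:
  assumes "1 \<le> i" "i \<le> L" "1 \<le> k" "k \<le> L + 1"
  shows "(ah L (i-1) k + ch L (i-1)) / (ah L i k + ch L i) \<ge> (1 / (1 + (real L + 1) / gam L ^ 2)) * PP L k i"
proof -
  define D where "D = (real L + 1) / gam L ^ 2"
  define x where "x = ah L (i-1) k"
  define y where "y = ah L i k"
  define c' where "c' = ch L (i-1)"
  define c where "c = ch L i"
  have D: "0 \<le> D" "D \<le> 1" "1 / gam L ^ 2 \<le> D" using D_facts[of L] unfolding D_def by auto
  have g8: "gam L \<ge> 8" using gam_ge8 assms by auto
  have x0: "x > 0" "y > 0" unfolding x_def y_def by (auto intro: ah_pos)
  have c'2: "c' \<ge> 2" unfolding c'_def using assms by (intro ch_ge2) auto
  have cle: "c \<le> 2 + D" unfolding c_def D_def by (rule ch_le)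
  have c1: "c \<ge> 1" unfolding c_def using assms by (intro ch_ge1) auto
  have yc: "y + c > 0" using x0 c1 by linarith
  have key: "(x + c') * ((1 + D) / PP L k i) \<ge> y + c"
  proof -
    consider "k \<le> i" | "k = Suc i" | "k = Suc (Suc i)" | "k \<ge> i + 3" by (atomize_elim) presburger
    then show ?thesis
    proof cases
      case 1
      then have P: "PP L k i = 1" unfolding PP_def using assms by auto
      have "x \<ge> y" unfolding x_def y_def using assms 1 by (intro ah_mono_lvl) auto
      have "D * (x + c') \<ge> D * 1" using D x0 c'2 by (intro mult_left_mono) auto
      then show ?thesis unfolding P using \<open>x \<ge> y\<close> c'2 cle by (simp add: algebra_simps)
    next
      case 2
      then have P: "PP L k i = 1 / gam L" unfolding PP_def using assms by auto
      have yg: "y = gam L" unfolding y_def 2 by (rule ah_mid)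
      have "(x + c') * (1 + D) \<ge> 2 * 1" using D x0 c'2 by (intro mult_mono) auto
      then have "(x + c') * (1 + D) * gam L \<ge> 2 * gam L" using g8 by (intro mult_right_mono) auto
      then show ?thesis unfolding P yg using cle D g8 by (simp add: algebra_simps)
    next
      case 3
      then have P: "PP L k i = 1 / 2" unfolding PP_def using assms by auto
      have y1: "y = 1" unfolding y_def 3 by (rule ah_right)
      have "(x + c') * (1 + D) \<ge> 2 * 1" using D x0 c'2 by (intro mult_mono) auto
      then show ?thesis unfolding P y1 using cle D by (simp add: algebra_simps)
    next
      case 4
      then have P: "PP L k i = 1" unfolding PP_def using assms by auto
      have "y \<le> 1 / gam L ^ 2" unfolding y_def using 4 by (intro ah_far) auto
      have "(x + c') * (1 + D) \<ge> 2 * (1 + D)" using D x0 c'2 by (intro mult_right_mono) auto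
      then show ?thesis unfolding P using \<open>y \<le> 1 / gam L ^ 2\<close> cle D by (simp add: algebra_simps)
    qed
  qed
  have Ppos: "PP L k i > 0" unfolding PP_def using g8 by auto
  have "1 + D > 0" using D by linarith
  then have dn: "1 + D \<noteq> 0" by linarith
  have "(y + c) * (PP L k i / (1 + D)) \<le> (x + c') * ((1 + D) / PP L k i) * (PP L k i / (1 + D))"
    using key Ppos D by (intro mult_right_mono) auto
  also have "\<dots> = (x + c') * (((1 + D) / PP L k i) * (PP L k i / (1 + D)))" by (simp only: mult.assoc)
  also have "((1 + D) / PP L k i) * (PP L k i / (1 + D)) = 1" using Ppos dn by simp
  also have "(x + c') * 1 = x + c'" by simp
  finally have "(y + c) * (PP L k i / (1 + D)) \<le> x + c'" .
  then have "(1 / (1 + D)) * PP L k i \<le> (x + c') / (y + c)"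
    using yc by (simp add: pos_le_divide_eq mult.commute)
  then show ?thesis unfolding x_def y_def c_def c'_def D_def .
qed

definition QQ :: "nat \<Rightarrow> real" where
  "QQ L = (gam L + real L + 2) / ((gam L + 2 * real L + 4 + (real L + 2) * ((real L + 1) / gam L ^ 2))
            * (1 + (real L + 1) / gam L ^ 2))"

lemma rho_bound:
  assumes "1 \<le> i" "i \<le> L" "1 \<le> k" "k \<le> L + 1"
  shows "piA L (i-1) k / piA L i k \<ge> QQ L * PP L k i"
proof -
  define D where "D = (real L + 1) / gam L ^ 2"
  define x where "x = ah L (i-1) k"
  define y where "y = ah L i k"
  define c' where "c' = ch L (i-1)"
  define c where "c = ch L i"
  define S' where "S' = (\<Sum>h=1..L+1. ah L (i-1) h)"
  define S where "S = (\<Sum>h=1..L+1. ah L i h)"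
  have D: "0 \<le> D" "D \<le> 1" using D_facts[of L] unfolding D_def by auto
  have g8: "gam L \<ge> 8" using gam_ge8 assms by auto
  have x0: "x > 0" "y > 0" unfolding x_def y_def by (auto intro: ah_pos)
  have c'2: "c' \<ge> 2" unfolding c'_def using assms by (intro ch_ge2) auto
  have c'le: "c' \<le> 2 + D" unfolding c'_def D_def by (rule ch_le)
  have c1: "c \<ge> 1" unfolding c_def using assms by (intro ch_ge1) auto
  have S'le: "S' \<le> gam L + 2 + D" unfolding S'_def D_def by (rule sah_le)
  have Sge: "S \<ge> gam L + 1" unfolding S_def using assms by (intro sah_ge) auto
  have "(real L + 1) * c' \<le> (real L + 1) * (2 + D)" using c'le by (intro mult_left_mono) auto
  then have Z'le: "S' + (real L + 1) * c' \<le> gam L + 2 * real L + 4 + (real L + 2) * D"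
    using S'le by (simp add: algebra_simps)
  have h: "(real L + 1) * c \<ge> (real L + 1) * 1" using c1 by (intro mult_left_mono) auto
  then have h: "(real L + 1) * c \<ge> real L + 1" by simp
  have Zge: "S + (real L + 1) * c \<ge> gam L + real L + 2" using Sge h by linarith
  have S'0: "S' \<ge> 0" unfolding S'_def by (intro sum_nonneg) (auto intro: less_imp_le[OF ah_pos])
  have "(real L + 1) * c' > 0" using c'2 by (intro mult_pos_pos) auto
  then have Zp: "S' + (real L + 1) * c' > 0" using S'0 by linarith
  have yc: "y + c > 0" using x0 c1 by linarith
  have gD: "gam L + 2 * real L + 4 + (real L + 2) * D > 0" using g8 D by (simp add: add_pos_nonneg)
  have Zr: "(gam L + real L + 2) / (gam L + 2 * real L + 4 + (real L + 2) * D)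
      \<le> (S + (real L + 1) * c) / (S' + (real L + 1) * c')"
    using Zge Z'le Zp g8 by (intro frac_le) auto
  have U: "(1 / (1 + D)) * PP L k i \<le> (x + c') / (y + c)"
    using U_bound[OF assms] unfolding x_def y_def c_def c'_def D_def .
  have P0: "PP L k i \<ge> 0" unfolding PP_def using g8 by auto
  have "QQ L * PP L k i = ((1 / (1 + D)) * PP L k i) * ((gam L + real L + 2) / (gam L + 2 * real L + 4 + (real L + 2) * D))"
    unfolding QQ_def D_def[symmetric] by (simp add: field_simps)
  also have "\<dots> \<le> ((x + c') / (y + c)) * ((S + (real L + 1) * c) / (S' + (real L + 1) * c'))"
    using U Zr P0 D g8 x0 c'2 yc by (intro mult_mono) auto
  also have "\<dots> = ((x + c') / (S' + (real L + 1) * c')) / ((y + c) / (S + (real L + 1) * c))"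
    by (simp add: field_simps)
  also have "\<dots> = piA L (i-1) k / piA L i k"
    unfolding piA_eq x_def y_def c_def c'_def S_def S'_def ..
  finally show ?thesis .
qed

lemma QQ_bounds:
  assumes "L \<ge> 1"
  shows "QQ L \<le> 1" "QQ L \<ge> 1 - 1 / (real L + 1)"
proof -
  define n where "n = real L + 1"
  define g where "g = gam L"
  define D where "D = n / g ^ 2"
  have n2: "n \<ge> 2" unfolding n_def using assms by simp
  have gn: "g = n ^ 3" unfolding g_def n_def gam_def ..
  have g8: "g \<ge> 8" unfolding g_def using gam_ge8[OF assms] .
  have ng: "n \<le> g" unfolding g_def n_def by (rule n_le_gam)
  have D: "0 \<le> D" "D \<le> 1" using D_facts[of L] unfolding D_def n_def g_def by auto
  have g0: "g > 0" using g8 by simp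
  have n4: "n * n \<ge> 2 * 2" using n2 by (intro mult_mono) auto
  have h: "n * 4 \<le> n * (n * n)" using n2 n4 by (intro mult_left_mono) auto
  have g4n: "n * 4 \<le> g" unfolding gn power3_eq_cube using h by (simp only: mult.assoc)
  then have n1g: "n + 1 \<le> g" using n2 by linarith
  have nng: "(n + 1) * n \<le> g * g" using n1g ng n2 by (intro mult_mono) auto
  have gg: "g * g > 0" using g0 by simp
  have "(real L + 2) * D = ((n + 1) * n) / (g * g)" unfolding D_def n_def power2_eq_square by simp
  also have "\<dots> \<le> 1" using nng gg by (simp add: pos_divide_le_eq)
  finally have F1: "(real L + 2) * D \<le> 1" .
  have "D * g = n / g" unfolding D_def power2_eq_square using g0 by simp
  also have "\<dots> \<le> 1" using ng g0 by simp
  finally have F2: "D * g \<le> 1" .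
  define Zu where "Zu = g + 2 * real L + 4 + (real L + 2) * D"
  have Zu1: "Zu \<le> g + 2 * n + 3" unfolding Zu_def n_def using F1 by simp
  have Zu2: "Zu \<le> 3 * g" using Zu1 g4n g8 by linarith
  have Zu0: "Zu \<ge> g + n + 1" unfolding Zu_def n_def using D by simp
  have "D * Zu \<le> D * (3 * g)" using Zu2 D by (intro mult_left_mono) auto
  then have DZ: "D * Zu \<le> 3" using F2 by simp
  have e: "gam L + real L + 2 = g + n + 1" unfolding g_def n_def by simp
  have QQe: "QQ L = (g + n + 1) / (Zu * (1 + D))"
    unfolding QQ_def Zu_def D_def e unfolding n_def g_def ..
  have X: "Zu * (1 + D) = Zu + D * Zu" by (simp add: algebra_simps)
  have Xp: "Zu * (1 + D) > 0" using Zu0 g0 n2 D by (intro mult_pos_pos) auto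
  have "D * Zu \<ge> 0" using D Zu0 g0 n2 by simp
  then have "g + n + 1 \<le> Zu * (1 + D)" unfolding X using Zu0 by linarith
  then show "QQ L \<le> 1" unfolding QQe using Xp by simp
  have Xu: "Zu * (1 + D) \<le> g + 2 * n + 6" unfolding X using Zu1 DZ by linarith
  have nn: "n * n * (n - 1) \<ge> 4 * (n - 1)" using n4 n2 by (intro mult_right_mono) auto
  have eqn: "n * n * (n - 1) = n * n * n - n * n" by (simp add: algebra_simps)
  have nn': "4 * (n - 1) \<le> n * n * n - n * n" using nn unfolding eqn .
  have gbig: "g \<ge> n * n + 3 * n - 6" unfolding gn power3_eq_cube using nn' n2
    by (smt (verit))
  have "(n - 1) * (Zu * (1 + D)) \<le> (n - 1) * (g + 2 * n + 6)" using Xu n2 by (intro mult_left_mono) auto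
  also have "\<dots> \<le> n * (g + n + 1)" using gbig by (simp add: algebra_simps)
  finally have key: "(n - 1) * (Zu * (1 + D)) \<le> n * (g + n + 1)" .
  have "1 - 1 / n = (n - 1) / n" using n2 by (simp add: field_simps)
  also have "\<dots> \<le> (g + n + 1) / (Zu * (1 + D))"
    using key Xp n2 by (simp add: divide_simps mult.commute)
  finally show "QQ L \<ge> 1 - 1 / (real L + 1)" unfolding QQe n_def .
qed

lemma prod_bound:
  assumes "L \<ge> 1" "1 \<le> k" "k \<le> L + 1"
  shows "(\<Prod>i=1..L. min 1 (piA L (i - 1) k / piA L i k)) \<ge> QQ L ^ L * (1 / gam L * (1 / 2))"
proof -
  have g8: "gam L \<ge> 8" using gam_ge8[OF assms(1)] .
  have Q: "QQ L \<le> 1" "QQ L \<ge> 1 - 1 / (real L + 1)" using QQ_bounds[OF assms(1)] by auto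
  have Q0: "QQ L \<ge> 0" using Q(2) by (smt (verit) assms(1) divide_le_eq_1 of_nat_0_le_iff)
  have g1: "1 / gam L \<le> 1" "0 \<le> 1 / gam L" using g8 by auto
  have P: "\<And>i. 0 \<le> PP L k i \<and> PP L k i \<le> 1" unfolding PP_def using g1 by auto
  have "(\<Prod>i=1..L. QQ L * PP L k i) \<le> (\<Prod>i=1..L. min 1 (piA L (i - 1) k / piA L i k))"
  proof (rule prod_mono)
    fix i assume i: "i \<in> {1..L}"
    have "QQ L * PP L k i \<le> 1 * 1" using Q Q0 P[of i] by (intro mult_mono) auto
    moreover have "QQ L * PP L k i \<le> piA L (i - 1) k / piA L i k"
      using rho_bound[of i L k] i assms by auto
    moreover have "0 \<le> QQ L * PP L k i" using Q0 P[of i] by simp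
    ultimately show "0 \<le> QQ L * PP L k i \<and> QQ L * PP L k i \<le> min 1 (piA L (i - 1) k / piA L i k)"
      by simp
  qed
  moreover have "(\<Prod>i=1..L. QQ L * PP L k i) = QQ L ^ L * ((if k - 1 \<in> {1..L} then 1 / gam L else 1) * (if k - 2 \<in> {1..L} then 1 / 2 else 1))"
    unfolding PP_def by (simp add: prod.distrib)
  moreover have "(if k - 1 \<in> {1..L} then 1 / gam L else 1) * (if k - 2 \<in> {1..L} then 1 / 2 else 1) \<ge> (1 / gam L * (1 / 2) :: real)"
    using g8 by (intro mult_mono) auto
  moreover have "QQ L ^ L \<ge> 0" using Q0 by simp
  ultimately show ?thesis by (smt (verit) mult_left_mono)
qed

theorem lemma12:
  fixes L :: nat
  assumes "L \<ge> 1"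
  shows "bottleneck L > 1 / (real L + 1) ^ 7"
proof -
  define n where "n = real L + 1"
  have n2: "n \<ge> 2" unfolding n_def using assms by simp
  have Q: "QQ L \<ge> 1 - 1 / n" using QQ_bounds[OF assms] unfolding n_def by auto
  have "1 / n \<le> 1 / 2" using n2 by (simp add: field_simps)
  then have Q0: "QQ L \<ge> 0" using Q by linarith
  have B: "1 + real L * (QQ L - 1) \<le> (1 + (QQ L - 1)) ^ L"
    by (rule Bernoulli_inequality) (use Q0 in simp)
  have "real L * (QQ L - 1) \<ge> real L * (- (1 / n))" using Q by (intro mult_left_mono) auto
  then have "1 + real L * (QQ L - 1) \<ge> 1 - real L / n" by simp
  moreover have "1 - real L / n = 1 / n" unfolding n_def by (simp add: field_simps)
  ultimately have QL: "QQ L ^ L \<ge> 1 / n" using B by simp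
  have gn: "gam L = n ^ 3" unfolding gam_def n_def ..
  have gp: "gam L > 0" using gam_ge[of L] by simp
  have lb: "QQ L ^ L * (1 / gam L * (1 / 2)) \<ge> 1 / n * (1 / gam L * (1 / 2))"
    using QL gp by (intro mult_right_mono) auto
  have "1 / n * (1 / gam L * (1 / 2)) = 1 / (2 * n ^ 4)" unfolding gn using n2
    by (simp add: field_simps power_eq_if)
  moreover have "1 / n ^ 7 < 1 / (2 * n ^ 4)"
  proof -
    have "n ^ 3 \<ge> 2 ^ 3" using n2 by (intro power_mono) auto
    then have "2 * n ^ 4 < n ^ 3 * n ^ 4" using n2 by (intro mult_strict_right_mono) auto
    also have "\<dots> = n ^ 7" by (simp flip: power_add)
    finally have "2 * n ^ 4 < n ^ 7" .
    then show ?thesis using n2 by (intro divide_strict_left_mono) auto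
  qed
  ultimately have target: "1 / n ^ 7 < QQ L ^ L * (1 / gam L * (1 / 2))" using lb by linarith
  have "\<forall>a \<in> (\<lambda>k. \<Prod>i=1..L. min 1 (piA L (i - 1) k / piA L i k)) ` {1..L+1}. 1 / n ^ 7 < a"
    using prod_bound[OF assms] target by fastforce
  then show ?thesis unfolding bottleneck_def n_def[symmetric]
    by (subst Min_gr_iff) auto
qed

end
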